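(* Let $n\ge 2$ be an integer and $A\subseteq L_n$. The following are equivalent: (i) $(X_n,\tau(A))$ is normal; (ii) the subset $L_n$ is $C^*$-embedded in $(X_n,\tau(A))$; (iii) the subset $L_n$ is $z$-embedded in $(X_n,\tau(A))$.
   Context: For $\overline{x},\overline{a}\in\mathbb R^n$ let $|\overline{x}-\overline{a}|$ be the Euclidean distance and $B(\overline{a},\epsilon)=\{\overline{x}\in\mathbb R^n:|\overline{x}-\overline{a}|<\epsilon\}$. Let $P_n=\{\overline{x}\in\mathbb R^n: x_n>0\}$, $L_n=\{\overline{x}\in\mathbb R^n: x_n=0\}$, $X_n=P_n\cup L_n$. For $\overline{a}\in L_n$ and $\epsilon>0$ put $\overline{a(\epsilon)}=(a_1,\dots,a_{n-1},\epsilon)$ and $\tilde B(\overline{a},\epsilon)=\{\overline{a}\}\cup B(\overline{a(\epsilon)},\epsilon)$. For $A\subseteq L_n$, the topology $\tau(A)$ on $X_n$ is generated by the local bases: at $\overline{a}\in P_n$, the sets $B(\overline{a},\epsilon)$ with $0<\epsilon<a_n$; at $\overline{a}\in A$, the sets $B(\overline{a},\epsilon)\cap X_n$ with $\epsilon>0$; at $\overline{a}\in L_n\setminus A$, the sets $\tilde B(\overline{a},\epsilon)$ with $\epsilon>0$. A subset $Y$ of a space $X$ is $C^*$-embedded in $X$ if every bounded continuous real function on $Y$ extends to a bounded continuous real function on $X$; $Y$ is $z$-embedded in $X$ if every zero set of $Y$ is the trace on $Y$ of some zero set of $X$. *)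

theory Defs
  imports "HOL-Analysis.Analysis"
begin

text \<open>We model R^n (n >= 2) as R^(n-1) x R, i.e. points are pairs (u, t) with
  u :: real^'m (the first n-1 coordinates, CARD('m) = n - 1 >= 1) and t the last
  coordinate.  The product metric on real^'m x real is the Euclidean one.\<close>

definition Xn :: "((real^'m) \<times> real) set" where
  "Xn = {p. snd p \<ge> 0}"

definition Ln :: "((real^'m) \<times> real) set" where
  "Ln = {p. snd p = 0}"

definition Pn :: "((real^'m) \<times> real) set" where
  "Pn = {p. snd p > 0}"

definition basic_nbhd :: "((real^'m) \<times> real) set \<Rightarrow> ((real^'m) \<times> real) \<Rightarrow> ((real^'m) \<times> real) set \<Rightarrow> bool" where
  "basic_nbhd A a N \<longleftrightarrow>
     (a \<in> Pn \<and> (\<exists>e. 0 < e \<and> e < snd a \<and> N = ball a e)) \<or>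
     (a \<in> A \<and> (\<exists>e>0. N = ball a e \<inter> Xn)) \<or>
     (a \<in> Ln - A \<and> (\<exists>e>0. N = insert a (ball (fst a, e) e)))"

definition tau :: "((real^'m) \<times> real) set \<Rightarrow> ((real^'m) \<times> real) topology" where
  "tau A = topology (\<lambda>U. U \<subseteq> Xn \<and> (\<forall>a\<in>U. \<exists>N. basic_nbhd A a N \<and> N \<subseteq> U))"

definition C_star_embedded :: "'a topology \<Rightarrow> 'a set \<Rightarrow> bool" where
  "C_star_embedded X Y \<longleftrightarrow>
     (\<forall>f. continuous_map (subtopology X Y) euclideanreal f \<and> bounded (f ` (topspace X \<inter> Y)) \<longrightarrow>
        (\<exists>g. continuous_map X euclideanreal g \<and> bounded (g ` topspace X) \<and>
             (\<forall>y \<in> topspace X \<inter> Y. g y = f y)))"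

definition zero_set :: "'a topology \<Rightarrow> ('a \<Rightarrow> real) \<Rightarrow> 'a set" where
  "zero_set X f = {x \<in> topspace X. f x = 0}"

definition is_zero_set :: "'a topology \<Rightarrow> 'a set \<Rightarrow> bool" where
  "is_zero_set X Z \<longleftrightarrow> (\<exists>f. continuous_map X euclideanreal f \<and> Z = zero_set X f)"

definition z_embedded :: "'a topology \<Rightarrow> 'a set \<Rightarrow> bool" where
  "z_embedded X Y \<longleftrightarrow>
     (\<forall>Z. is_zero_set (subtopology X Y) Z \<longrightarrow>
        (\<exists>Z'. is_zero_set X Z' \<and> Z = Z' \<inter> (topspace X \<inter> Y)))"

end

theory Submission
  imports Defs
begin

lemma snd_le_dist: "\<bar>snd x - snd y\<bar> \<le> dist x y"
  using dist_snd_le[of x y] by (simp add: dist_real_def)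

lemma tball_mono:
  fixes u :: "'a::metric_space"
  assumes "0 < e" "e \<le> e'" shows "ball (u, e) e \<subseteq> ball (u, e') e'"
proof
  fix z assume "z \<in> ball (u, e) e"
  hence "dist (u, e) z < e" by simp
  moreover have "dist (u, e') (u, e) = e' - e" using assms by (simp add: dist_Pair_Pair dist_real_def)
  moreover have "dist (u, e') z \<le> dist (u, e') (u, e) + dist (u, e) z" by (rule dist_triangle)
  ultimately show "z \<in> ball (u, e') e'" by simp
qed

lemma tball_Pn: "ball (u, e) e \<subseteq> Pn"
proof
  fix z assume "z \<in> ball (u, e) e"
  hence "dist (u, e) z < e" by simp
  with snd_le_dist[of "(u,e)" z] show "z \<in> Pn" by (simp add: Pn_def)
qed

lemma Pn_Xn: "Pn \<subseteq> Xn" and Ln_Xn: "Ln \<subseteq> Xn" and Xn_cases: "Xn = Pn \<union> Ln"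
  and Pn_Ln: "Pn \<inter> Ln = {}"
  by (auto simp: Pn_def Xn_def Ln_def)

lemma tball_in_ball:
  assumes "snd b = 0" "0 < e" shows "ball (fst b, e/2) (e/2) \<subseteq> ball b e"
proof
  fix z assume "z \<in> ball (fst b, e/2) (e/2)"
  hence "dist (fst b, e/2) z < e/2" by simp
  moreover have "dist b (fst b, e/2) = e/2"
    using assms by (cases b) (simp add: dist_Pair_Pair dist_real_def)
  moreover have "dist b z \<le> dist b (fst b, e/2) + dist (fst b, e/2) z" by (rule dist_triangle)
  ultimately show "z \<in> ball b e" by simp
qed

lemma ball_sub: "ball b (e - dist a b) \<subseteq> ball a (e::real)"
proof
  fix z assume "z \<in> ball b (e - dist a b)"
  then have "dist b z < e - dist a b" by simp
  moreover have "dist a z \<le> dist a b + dist b z" by (rule dist_triangle)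
  ultimately show "z \<in> ball a e" by simp
qed

lemma basic_P: "a \<in> Pn \<Longrightarrow> 0 < e \<Longrightarrow> e < snd a \<Longrightarrow> basic_nbhd A a (ball a e)"
  unfolding basic_nbhd_def by blast
lemma basic_A: "a \<in> A \<Longrightarrow> 0 < e \<Longrightarrow> basic_nbhd A a (ball a e \<inter> Xn)"
  unfolding basic_nbhd_def by blast
lemma basic_T: "a \<in> Ln - A \<Longrightarrow> 0 < e \<Longrightarrow> basic_nbhd A a (insert a (ball (fst a, e) e))"
  unfolding basic_nbhd_def by blast

lemma basic_nbhd_inter:
  fixes A :: "((real^'m) \<times> real) set"
  assumes A: "A \<subseteq> Ln" and 1: "basic_nbhd A a N1" and 2: "basic_nbhd A a N2"
  shows "\<exists>N. basic_nbhd A a N \<and> N \<subseteq> N1 \<inter> N2"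
proof -
  have ex: "a \<in> Pn \<Longrightarrow> a \<notin> A" "a \<in> Pn \<Longrightarrow> a \<notin> Ln" using A Pn_Ln by auto
  consider "a \<in> Pn" | "a \<in> A" | "a \<in> Ln - A" using 1 unfolding basic_nbhd_def by blast
  then show ?thesis
  proof cases
    case c: 1
    then obtain e1 e2 where "0 < e1" "e1 < snd a" "N1 = ball a e1" "0 < e2" "e2 < snd a" "N2 = ball a e2"
      using 1 2 ex unfolding basic_nbhd_def by auto
    then show ?thesis using c basic_P[of a "min e1 e2" A]
      by (intro exI[of _ "ball a (min e1 e2)"]) auto
  next
    case c: 2
    then obtain e1 e2 where "0 < e1" "N1 = ball a e1 \<inter> Xn" "0 < e2" "N2 = ball a e2 \<inter> Xn"
      using 1 2 A Pn_Ln unfolding basic_nbhd_def by auto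
    then show ?thesis using c basic_A[of a A "min e1 e2"]
      by (intro exI[of _ "ball a (min e1 e2) \<inter> Xn"]) auto
  next
    case c: 3
    then obtain e1 e2 where "0 < e1" "N1 = insert a (ball (fst a, e1) e1)" "0 < e2" "N2 = insert a (ball (fst a, e2) e2)"
      using 1 2 A Pn_Ln unfolding basic_nbhd_def by auto
    moreover have "ball (fst a, min e1 e2) (min e1 e2) \<subseteq> ball (fst a, e1) e1"
      by (rule tball_mono) (use calculation in auto)
    moreover have "ball (fst a, min e1 e2) (min e1 e2) \<subseteq> ball (fst a, e2) e2"
      by (rule tball_mono) (use calculation in auto)
    ultimately show ?thesis using c basic_T[of a A "min e1 e2"]
      by (intro exI[of _ "insert a (ball (fst a, min e1 e2) (min e1 e2))"]) auto
  qed
qed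

lemma istop_tau:
  fixes A :: "((real^'m) \<times> real) set"
  assumes A: "A \<subseteq> Ln"
  shows "istopology (\<lambda>U. U \<subseteq> Xn \<and> (\<forall>a\<in>U. \<exists>N. basic_nbhd A a N \<and> N \<subseteq> U))"
  unfolding istopology_def
proof (rule conjI; intro allI impI)
  fix S T :: "((real^'m) \<times> real) set"
  assume S: "S \<subseteq> Xn \<and> (\<forall>a\<in>S. \<exists>N. basic_nbhd A a N \<and> N \<subseteq> S)"
     and T: "T \<subseteq> Xn \<and> (\<forall>a\<in>T. \<exists>N. basic_nbhd A a N \<and> N \<subseteq> T)"
  show "S \<inter> T \<subseteq> Xn \<and> (\<forall>a\<in>S \<inter> T. \<exists>N. basic_nbhd A a N \<and> N \<subseteq> S \<inter> T)"
  proof (intro conjI ballI)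
    show "S \<inter> T \<subseteq> Xn" using S by blast
    fix a assume aST: "a \<in> S \<inter> T"
    have S2: "\<forall>a\<in>S. \<exists>N. basic_nbhd A a N \<and> N \<subseteq> S" using S by (rule conjunct2)
    have T2: "\<forall>a\<in>T. \<exists>N. basic_nbhd A a N \<and> N \<subseteq> T" using T by (rule conjunct2)
    have aS: "a \<in> S" and aT: "a \<in> T" using aST by auto
    obtain N1 where N1: "basic_nbhd A a N1 \<and> N1 \<subseteq> S" using bspec[OF S2 aS] by (elim exE)
    obtain N2 where N2: "basic_nbhd A a N2 \<and> N2 \<subseteq> T" using bspec[OF T2 aT] by (elim exE)
    obtain N where N: "basic_nbhd A a N \<and> N \<subseteq> N1 \<inter> N2"
      using basic_nbhd_inter[OF A conjunct1[OF N1] conjunct1[OF N2]] by (elim exE)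
    have "N \<subseteq> S \<inter> T" using N N1 N2 by auto
    then show "\<exists>N. basic_nbhd A a N \<and> N \<subseteq> S \<inter> T" using N by auto
  qed
next
  fix K :: "((real^'m) \<times> real) set set"
  assume KK: "\<forall>U\<in>K. U \<subseteq> Xn \<and> (\<forall>a\<in>U. \<exists>N. basic_nbhd A a N \<and> N \<subseteq> U)"
  show "\<Union>K \<subseteq> Xn \<and> (\<forall>a\<in>\<Union>K. \<exists>N. basic_nbhd A a N \<and> N \<subseteq> \<Union>K)"
  proof (intro conjI ballI)
    show "\<Union>K \<subseteq> Xn" using KK by auto
    fix a assume "a \<in> \<Union>K"
    then obtain U where U: "U \<in> K" "a \<in> U" by auto
    have "\<forall>a\<in>U. \<exists>N. basic_nbhd A a N \<and> N \<subseteq> U" using bspec[OF KK U(1)] by (rule conjunct2)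
    then obtain N where N: "basic_nbhd A a N \<and> N \<subseteq> U" using U(2) by auto
    have "N \<subseteq> \<Union>K" using N U by auto
    thus "\<exists>N. basic_nbhd A a N \<and> N \<subseteq> \<Union>K" using N by auto
  qed
qed

lemma openin_tau:
  fixes A :: "((real^'m) \<times> real) set"
  assumes "A \<subseteq> Ln"
  shows "openin (tau A) U \<longleftrightarrow> U \<subseteq> Xn \<and> (\<forall>a\<in>U. \<exists>N. basic_nbhd A a N \<and> N \<subseteq> U)"
  unfolding tau_def using topology_inverse'[OF istop_tau[OF assms]] by simp

lemma Pn_ball_Xn:
  assumes "a \<in> Pn" "e \<le> snd a" shows "ball a e \<subseteq> Pn"
proof
  fix z assume "z \<in> ball a e"
  with snd_le_dist[of a z] assms show "z \<in> Pn" by (auto simp: Pn_def)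
qed

lemma openin_tau_eucl:
  fixes A :: "((real^'m) \<times> real) set"
  assumes A: "A \<subseteq> Ln" and S: "S \<subseteq> Xn" and B: "\<And>b. b \<in> S \<Longrightarrow> \<exists>e>0. ball b e \<inter> Xn \<subseteq> S"
  shows "openin (tau A) S"
  unfolding openin_tau[OF A]
proof (intro conjI ballI)
  show "S \<subseteq> Xn" by fact
  fix b assume b: "b \<in> S"
  then obtain e where e: "e > 0" "ball b e \<inter> Xn \<subseteq> S" using B by blast
  have "b \<in> Pn \<or> b \<in> A \<or> b \<in> Ln - A" using b S Xn_cases by blast
  then show "\<exists>N. basic_nbhd A b N \<and> N \<subseteq> S"
  proof (elim disjE)
    assume bP: "b \<in> Pn"
    define d where "d = min e (snd b / 2)"
    have d: "0 < d" "d < snd b" using bP e by (auto simp: d_def Pn_def)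
    have "ball b d \<subseteq> Pn" using Pn_ball_Xn[OF bP] d by simp
    moreover have "ball b d \<subseteq> ball b e" by (auto simp: d_def)
    ultimately have "ball b d \<subseteq> S" using e Pn_Xn by blast
    thus ?thesis using bP d unfolding basic_nbhd_def by blast
  next
    assume "b \<in> A" thus ?thesis using e unfolding basic_nbhd_def by blast
  next
    assume bL: "b \<in> Ln - A"
    hence "snd b = 0" by (auto simp: Ln_def)
    hence "ball (fst b, e/2) (e/2) \<subseteq> ball b e" using e(1) by (rule tball_in_ball)
    moreover have "ball (fst b, e/2) (e/2) \<subseteq> Xn" using tball_Pn Pn_Xn by blast
    ultimately have "insert b (ball (fst b, e/2) (e/2)) \<subseteq> S" using e b by blast
    moreover have "basic_nbhd A b (insert b (ball (fst b, e/2) (e/2)))" using bL e by (intro basic_T) auto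
    ultimately show ?thesis by blast
  qed
qed

lemma basic_nbhd_open:
  fixes A :: "((real^'m) \<times> real) set"
  assumes A: "A \<subseteq> Ln" and N: "basic_nbhd A a N"
  shows "openin (tau A) N \<and> a \<in> N \<and> N \<subseteq> Xn"
proof -
  consider (P) e where "a \<in> Pn" "0 < e" "e < snd a" "N = ball a e"
    | (H) e where "a \<in> A" "0 < e" "N = ball a e \<inter> Xn"
    | (T) e where "a \<in> Ln - A" "0 < e" "N = insert a (ball (fst a, e) e)"
    using N unfolding basic_nbhd_def by blast
  then show ?thesis
  proof cases
    case P
    have sub: "N \<subseteq> Xn" using P Pn_ball_Xn[of a e] Pn_Xn by auto
    have "openin (tau A) N"
    proof (rule openin_tau_eucl[OF A sub])
      fix b assume "b \<in> N"
      hence "e - dist a b > 0" using P by simp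
      moreover have "ball b (e - dist a b) \<subseteq> N" using P ball_sub by blast
      ultimately show "\<exists>e>0. ball b e \<inter> Xn \<subseteq> N" by blast
    qed
    thus ?thesis using P sub by simp
  next
    case H
    have sub: "N \<subseteq> Xn" using H by auto
    have "openin (tau A) N"
    proof (rule openin_tau_eucl[OF A sub])
      fix b assume "b \<in> N"
      hence "e - dist a b > 0" using H by simp
      moreover have "ball b (e - dist a b) \<inter> Xn \<subseteq> N" using H ball_sub by blast
      ultimately show "\<exists>e>0. ball b e \<inter> Xn \<subseteq> N" by blast
    qed
    thus ?thesis using H A Ln_Xn by auto
  next
    case T
    have sub: "N \<subseteq> Xn" using T tball_Pn Pn_Xn Ln_Xn by blast
    have "openin (tau A) N"
      unfolding openin_tau[OF A]
    proof (intro conjI ballI)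
      show "N \<subseteq> Xn" by fact
      fix b assume b: "b \<in> N"
      show "\<exists>N'. basic_nbhd A b N' \<and> N' \<subseteq> N"
      proof (cases "b = a")
        case True thus ?thesis using T N by blast
      next
        case False
        hence bb: "b \<in> ball (fst a, e) e" using b T by auto
        hence bP: "b \<in> Pn" using tball_Pn by blast
        define d where "d = min (e - dist (fst a, e) b) (snd b / 2)"
        have d: "0 < d" "d < snd b" using bb bP by (auto simp: d_def Pn_def)
        have "ball b d \<subseteq> ball b (e - dist (fst a, e) b)" by (auto simp: d_def)
        hence "ball b d \<subseteq> N" using T ball_sub by blast
        thus ?thesis using bP d unfolding basic_nbhd_def by blast
      qed
    qed
    thus ?thesis using T sub by simp
  qed
qed

lemma topspace_tau:
  fixes A :: "((real^'m) \<times> real) set"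
  assumes A: "A \<subseteq> Ln" shows "topspace (tau A) = Xn"
proof -
  have "openin (tau A) Xn"
  proof (rule openin_tau_eucl[OF A])
    fix b assume "b \<in> Xn" thus "\<exists>e>0. ball b e \<inter> Xn \<subseteq> Xn" by (intro exI[of _ 1]) auto
  qed auto
  moreover have "topspace (tau A) \<subseteq> Xn" using openin_tau[OF A] openin_topspace by blast
  ultimately show ?thesis using openin_subset by blast
qed

lemma closedin_Ln:
  fixes A :: "((real^'m) \<times> real) set"
  assumes A: "A \<subseteq> Ln" shows "closedin (tau A) Ln"
proof -
  have "openin (tau A) Pn"
  proof (rule openin_tau_eucl[OF A Pn_Xn])
    fix b assume b: "b \<in> Pn"
    hence "snd b > 0" by (simp add: Pn_def)
    moreover have "ball b (snd b) \<inter> Xn \<subseteq> Pn" using Pn_ball_Xn[OF b] by auto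
    ultimately show "\<exists>e>0. ball b e \<inter> Xn \<subseteq> Pn" by blast
  qed
  moreover have "topspace (tau A) - Ln = Pn" unfolding topspace_tau[OF A] by (auto simp: Xn_def Ln_def Pn_def)
  moreover have "Ln \<subseteq> topspace (tau A)" unfolding topspace_tau[OF A] by (rule Ln_Xn)
  ultimately show ?thesis unfolding closedin_def by simp
qed


lemma normal_Cstar:
  fixes A :: "((real^'m) \<times> real) set"
  assumes A: "A \<subseteq> Ln" and N: "normal_space (tau A)"
  shows "C_star_embedded (tau A) Ln"
  unfolding C_star_embedded_def
proof (intro allI impI)
  fix f :: "(real^'m) \<times> real \<Rightarrow> real"
  assume "continuous_map (subtopology (tau A) Ln) euclideanreal f \<and> bounded (f ` (topspace (tau A) \<inter> Ln))"
  hence cf: "continuous_map (subtopology (tau A) Ln) euclideanreal f"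
    and bf0: "bounded (f ` (topspace (tau A) \<inter> Ln))" by auto
  have "topspace (tau A) \<inter> Ln = Ln" using topspace_tau[OF A] Ln_Xn by blast
  hence bf: "bounded (f ` Ln)" using bf0 by simp
  obtain B where B: "\<forall>x\<in>f ` Ln. norm x \<le> B" using bf bounded_iff by blast
  define C where "C = max B 0"
  have fim: "f ` Ln \<subseteq> {-C..C}" using B by (force simp: C_def)
  obtain g where g: "continuous_map (tau A) euclideanreal g" "\<And>x. x \<in> Ln \<Longrightarrow> g x = f x"
     "g ` topspace (tau A) \<subseteq> {-C..C}"
    using Tietze_extension_closed_real_interval[OF N closedin_Ln[OF A] cf fim] by (auto simp: C_def)
  have "bounded (g ` topspace (tau A))" using g(3) bounded_subset bounded_closed_interval by blast
  thus "\<exists>g. continuous_map (tau A) euclideanreal g \<and> bounded (g ` topspace (tau A)) \<and>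
             (\<forall>y \<in> topspace (tau A) \<inter> Ln. g y = f y)" using g by blast
qed

lemma Cstar_z:
  assumes C: "C_star_embedded X Y"
  shows "z_embedded X Y"
  unfolding z_embedded_def
proof (intro allI impI)
  fix Z assume "is_zero_set (subtopology X Y) Z"
  then obtain f where cf: "continuous_map (subtopology X Y) euclideanreal f"
    and Z: "Z = zero_set (subtopology X Y) f" unfolding is_zero_set_def by blast
  define f' where "f' = (\<lambda>x. min \<bar>f x\<bar> 1)"
  have cf': "continuous_map (subtopology X Y) euclideanreal f'"
    unfolding f'_def by (intro continuous_intros cf)
  have "f' ` (topspace X \<inter> Y) \<subseteq> {0..1}" by (auto simp: f'_def)
  hence "bounded (f' ` (topspace X \<inter> Y))" using bounded_subset bounded_closed_interval by blast
  then obtain g where g: "continuous_map X euclideanreal g" "\<forall>y \<in> topspace X \<inter> Y. g y = f' y"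
    using C cf' unfolding C_star_embedded_def by blast
  have "\<And>y. y \<in> topspace X \<inter> Y \<Longrightarrow> g y = 0 \<longleftrightarrow> f y = 0"
  proof -
    fix y assume "y \<in> topspace X \<inter> Y"
    hence "g y = min \<bar>f y\<bar> 1" using g(2) by (simp add: f'_def)
    thus "g y = 0 \<longleftrightarrow> f y = 0" by (auto simp: min_def)
  qed
  hence "Z = zero_set X g \<inter> (topspace X \<inter> Y)"
    unfolding Z zero_set_def by auto
  moreover have "is_zero_set X (zero_set X g)" using g(1) unfolding is_zero_set_def by blast
  ultimately show "\<exists>Z'. is_zero_set X Z' \<and> Z = Z' \<inter> (topspace X \<inter> Y)" by blast
qed


lemma topspace_sub_Ln: "A \<subseteq> Ln \<Longrightarrow> topspace (subtopology (tau A) Ln) = Ln"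
  using topspace_tau[of A] Ln_Xn by auto

lemma cont_Ln:
  fixes A :: "((real^'m) \<times> real) set"
  assumes A: "A \<subseteq> Ln"
    and loc: "\<And>p e. p \<in> A \<Longrightarrow> e > 0 \<Longrightarrow> \<exists>d>0. \<forall>q\<in>Ln. dist q p < d \<longrightarrow> \<bar>g q - g p\<bar> < e"
  shows "continuous_map (subtopology (tau A) Ln) euclideanreal g"
  unfolding continuous_map_def
proof (intro conjI allI impI)
  show "g \<in> topspace (subtopology (tau A) Ln) \<rightarrow> topspace euclideanreal" by simp
  fix U :: "real set" assume "openin euclideanreal U"
  hence oU: "open U" by simp
  show "openin (subtopology (tau A) Ln) {x \<in> topspace (subtopology (tau A) Ln). g x \<in> U}"
    unfolding topspace_sub_Ln[OF A]
  proof (subst openin_subopen, intro ballI)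
    fix x assume x: "x \<in> {x \<in> Ln. g x \<in> U}"
    show "\<exists>T. openin (subtopology (tau A) Ln) T \<and> x \<in> T \<and> T \<subseteq> {x \<in> Ln. g x \<in> U}"
    proof (cases "x \<in> A")
      case True
      obtain e where e: "e > 0" "ball (g x) e \<subseteq> U" using oU x open_contains_ball by blast
      obtain d where d: "d > 0" "\<forall>q\<in>Ln. dist q x < d \<longrightarrow> \<bar>g q - g x\<bar> < e" using loc[OF True e(1)] by blast
      have bn: "basic_nbhd A x (ball x d \<inter> Xn)" using True d(1) by (rule basic_A)
      have "openin (subtopology (tau A) Ln) ((ball x d \<inter> Xn) \<inter> Ln)"
        using basic_nbhd_open[OF A bn] openin_subtopology by blast
      moreover have "(ball x d \<inter> Xn) \<inter> Ln \<subseteq> {x \<in> Ln. g x \<in> U}"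
      proof
        fix q assume q: "q \<in> (ball x d \<inter> Xn) \<inter> Ln"
        hence "\<bar>g q - g x\<bar> < e" using d by (auto simp: dist_commute)
        hence "g q \<in> ball (g x) e" by (simp add: dist_real_def)
        thus "q \<in> {x \<in> Ln. g x \<in> U}" using e q by auto
      qed
      moreover have "x \<in> (ball x d \<inter> Xn) \<inter> Ln" using x d Ln_Xn by auto
      ultimately show ?thesis by blast
    next
      case False
      hence bn: "basic_nbhd A x (insert x (ball (fst x, 1) 1))" using x by (intro basic_T) auto
      have "openin (subtopology (tau A) Ln) ((insert x (ball (fst x, 1) 1)) \<inter> Ln)"
        using basic_nbhd_open[OF A bn] openin_subtopology by blast
      moreover have "(insert x (ball (fst x, 1) 1)) \<inter> Ln = {x}" using x tball_Pn Pn_Ln by blast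
      ultimately show ?thesis using x by auto
    qed
  qed
qed

lemma closed_A_dist:
  fixes A :: "((real^'m) \<times> real) set"
  assumes A: "A \<subseteq> Ln" and H: "closedin (tau A) H" and p: "p \<in> A" "p \<notin> H" and ne: "H \<noteq> {}"
  shows "infdist p H > 0"
proof -
  have "openin (tau A) (Xn - H)" using H topspace_tau[OF A] by (simp add: closedin_def)
  moreover have "p \<in> Xn - H" using p A Ln_Xn by auto
  ultimately obtain N where N: "basic_nbhd A p N" "N \<subseteq> Xn - H" using openin_tau[OF A] by blast
  then obtain e where e: "e > 0" "N = ball p e \<inter> Xn" using p A Pn_Ln unfolding basic_nbhd_def by auto
  have HX: "H \<subseteq> Xn" using closedin_subset[OF H] topspace_tau[OF A] by simp
  have "\<forall>h\<in>H. e \<le> dist p h"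
  proof
    fix h assume "h \<in> H"
    hence "h \<notin> ball p e" using N e HX by auto
    thus "e \<le> dist p h" by simp
  qed
  hence "e \<le> infdist p H" unfolding infdist_notempty[OF ne] by (intro cINF_greatest ne) auto
  thus ?thesis using e by simp
qed

lemma sep_L:
  fixes A :: "((real^'m) \<times> real) set"
  assumes A: "A \<subseteq> Ln" and z: "z_embedded (tau A) Ln"
    and HL: "H \<subseteq> Ln" and KL: "K \<subseteq> Ln" and H: "closedin (tau A) H" and K: "closedin (tau A) K"
    and HK: "H \<inter> K = {}"
  shows "\<exists>U V. openin (tau A) U \<and> openin (tau A) V \<and> H \<subseteq> U \<and> K \<subseteq> V \<and> U \<inter> V = {}"
proof (cases "H = {} \<or> K = {}")
  case True
  have "openin (tau A) (topspace (tau A))" by simp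
  moreover have "H \<subseteq> topspace (tau A)" "K \<subseteq> topspace (tau A)" using H K closedin_subset by auto
  ultimately show ?thesis using True by (metis empty_subsetI inf_bot_left inf_bot_right openin_empty)
next
  case False
  hence Hne: "H \<noteq> {}" and Kne: "K \<noteq> {}" by auto
  define E where "E = {q. infdist q H = 0 \<and> infdist q K = 0}"
  define g where "g = (\<lambda>q. if q \<in> E then (if q \<in> H then -1 else 1) else infdist q H - infdist q K)"
  have posA: "infdist p H + infdist p K > 0" if "p \<in> A" for p
  proof (cases "p \<in> H")
    case True
    hence "p \<notin> K" using HK by auto
    thus ?thesis using closed_A_dist[OF A K that _ Kne] infdist_nonneg[of p H] by simp
  next
    case False
    thus ?thesis using closed_A_dist[OF A H that _ Hne] infdist_nonneg[of p K] by simp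
  qed
  have cg: "continuous_map (subtopology (tau A) Ln) euclideanreal g"
  proof (rule cont_Ln[OF A])
    fix p :: "(real^'m) \<times> real" and e :: real assume p: "p \<in> A" and e: "e > 0"
    define c where "c = infdist p H + infdist p K"
    have c: "c > 0" using posA[OF p] by (simp add: c_def)
    have pE: "p \<notin> E" using c by (auto simp: E_def c_def)
    show "\<exists>d>0. \<forall>q\<in>Ln. dist q p < d \<longrightarrow> \<bar>g q - g p\<bar> < e"
    proof (intro exI[of _ "min (e/2) (c/2)"] conjI ballI impI)
      show "min (e/2) (c/2) > 0" using e c by simp
      fix q assume "q \<in> Ln" "dist q p < min (e/2) (c/2)"
      hence dq: "dist q p < e/2" "dist q p < c/2" by auto
      have t1: "infdist q H \<le> infdist p H + dist q p" "infdist p H \<le> infdist q H + dist q p"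
        using infdist_triangle[of q H p] infdist_triangle[of p H q] by (auto simp: dist_commute)
      have t2: "infdist q K \<le> infdist p K + dist q p" "infdist p K \<le> infdist q K + dist q p"
        using infdist_triangle[of q K p] infdist_triangle[of p K q] by (auto simp: dist_commute)
      have "infdist q H + infdist q K > 0" using t1 t2 dq c unfolding c_def by argo
      hence qE: "q \<notin> E" using infdist_nonneg[of q H] infdist_nonneg[of q K] by (auto simp: E_def)
      have "\<bar>g q - g p\<bar> = \<bar>(infdist q H - infdist q K) - (infdist p H - infdist p K)\<bar>"
        using qE pE by (simp add: g_def)
      also have "\<dots> < e" unfolding abs_less_iff using t1 t2 dq by (intro conjI) linarith+
      finally show "\<bar>g q - g p\<bar> < e" .
    qed
  qed
  have gH: "g p < 0" if "p \<in> H" for p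
  proof (cases "p \<in> E")
    case True thus ?thesis using that by (simp add: g_def)
  next
    case False
    hence "infdist p K \<noteq> 0" using that by (simp add: E_def)
    hence "infdist p K > 0" using infdist_nonneg[of p K] by linarith
    thus ?thesis using False that by (simp add: g_def)
  qed
  have gK: "g p > 0" if "p \<in> K" for p
  proof (cases "p \<in> E")
    case True thus ?thesis using that HK by (auto simp: g_def)
  next
    case False
    hence "infdist p H \<noteq> 0" using that by (simp add: E_def)
    hence "infdist p H > 0" using infdist_nonneg[of p H] by linarith
    thus ?thesis using False that by (simp add: g_def)
  qed
  define g1 where "g1 = (\<lambda>q. max (g q) 0)"
  define g2 where "g2 = (\<lambda>q. max (- g q) 0)"
  have cg1: "continuous_map (subtopology (tau A) Ln) euclideanreal g1"
    unfolding g1_def by (intro continuous_intros cg)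
  have cg2: "continuous_map (subtopology (tau A) Ln) euclideanreal g2"
    unfolding g2_def by (intro continuous_intros cg)
  obtain Z1 where Z1: "is_zero_set (tau A) Z1"
      "zero_set (subtopology (tau A) Ln) g1 = Z1 \<inter> (topspace (tau A) \<inter> Ln)"
    using z cg1 unfolding z_embedded_def is_zero_set_def by blast
  obtain Z2 where Z2: "is_zero_set (tau A) Z2"
      "zero_set (subtopology (tau A) Ln) g2 = Z2 \<inter> (topspace (tau A) \<inter> Ln)"
    using z cg2 unfolding z_embedded_def is_zero_set_def by blast
  obtain h1 where h1: "continuous_map (tau A) euclideanreal h1" "Z1 = zero_set (tau A) h1"
    using Z1(1) unfolding is_zero_set_def by blast
  obtain h2 where h2: "continuous_map (tau A) euclideanreal h2" "Z2 = zero_set (tau A) h2"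
    using Z2(1) unfolding is_zero_set_def by blast
  have TL: "topspace (tau A) \<inter> Ln = Ln" using topspace_tau[OF A] Ln_Xn by auto
  have h1z: "h1 p = 0 \<longleftrightarrow> g1 p = 0" if "p \<in> Ln" for p
  proof -
    have "p \<in> zero_set (subtopology (tau A) Ln) g1 \<longleftrightarrow> p \<in> Z1 \<inter> (topspace (tau A) \<inter> Ln)"
      using Z1(2) by simp
    thus ?thesis using that TL topspace_sub_Ln[OF A] unfolding h1(2) zero_set_def by auto
  qed
  have h2z: "h2 p = 0 \<longleftrightarrow> g2 p = 0" if "p \<in> Ln" for p
  proof -
    have "p \<in> zero_set (subtopology (tau A) Ln) g2 \<longleftrightarrow> p \<in> Z2 \<inter> (topspace (tau A) \<inter> Ln)"
      using Z2(2) by simp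
    thus ?thesis using that TL topspace_sub_Ln[OF A] unfolding h2(2) zero_set_def by auto
  qed
  define U where "U = {x \<in> topspace (tau A). \<bar>h1 x\<bar> - \<bar>h2 x\<bar> \<in> {..<0}}"
  define V where "V = {x \<in> topspace (tau A). \<bar>h1 x\<bar> - \<bar>h2 x\<bar> \<in> {0<..}}"
  have ch: "continuous_map (tau A) euclideanreal (\<lambda>x. \<bar>h1 x\<bar> - \<bar>h2 x\<bar>)"
    by (intro continuous_intros h1(1) h2(1))
  have "openin (tau A) U" unfolding U_def by (rule openin_continuous_map_preimage[OF ch]) simp
  moreover have "openin (tau A) V" unfolding V_def by (rule openin_continuous_map_preimage[OF ch]) simp
  moreover have "H \<subseteq> U"
  proof
    fix p assume p: "p \<in> H"
    hence pL: "p \<in> Ln" using HL by auto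
    have "h1 p = 0" using h1z[OF pL] gH[OF p] by (simp add: g1_def)
    moreover have "h2 p \<noteq> 0" using h2z[OF pL] gH[OF p] by (simp add: g2_def)
    ultimately show "p \<in> U" using pL TL by (auto simp: U_def)
  qed
  moreover have "K \<subseteq> V"
  proof
    fix p assume p: "p \<in> K"
    hence pL: "p \<in> Ln" using KL by auto
    have "h2 p = 0" using h2z[OF pL] gK[OF p] by (simp add: g2_def)
    moreover have "h1 p \<noteq> 0" using h1z[OF pL] gK[OF p] by (simp add: g1_def)
    ultimately show "p \<in> V" using pL TL by (auto simp: V_def)
  qed
  moreover have "U \<inter> V = {}" by (auto simp: U_def V_def)
  ultimately show ?thesis by blast
qed


definition nb :: "((real^'m) \<times> real) set \<Rightarrow> (real^'m) \<times> real \<Rightarrow> real \<Rightarrow> ((real^'m) \<times> real) set" where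
  "nb A q e = (if q \<in> A then ball q e \<inter> Xn else insert q (ball (fst q, e) e))"

lemma geo:
  fixes q x y :: "(real^'m) \<times> real"
  assumes q: "q \<in> Ln" and r: "r > 0" and s: "snd x > 0" and x: "x \<notin> nb A q (2*r)" and y: "y \<in> nb A q r"
  shows "dist x y \<ge> snd x / 2"
proof (cases "q \<in> A")
  case True
  have sq: "snd q = 0" using q by (simp add: Ln_def)
  have xX: "x \<in> Xn" using s by (simp add: Xn_def)
  have dy: "dist q y < r" using y True by (simp add: nb_def)
  have dx: "dist q x \<ge> 2*r" using x True xX by (auto simp: nb_def)
  have "dist q x \<le> dist q y + dist y x" by (rule dist_triangle)
  hence 1: "dist x y \<ge> r" using dy dx by (simp add: dist_commute)
  have "\<bar>snd q - snd y\<bar> \<le> dist q y" by (rule snd_le_dist)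
  hence "snd y < r" using dy sq by linarith
  moreover have "\<bar>snd x - snd y\<bar> \<le> dist x y" by (rule snd_le_dist)
  ultimately have "dist x y \<ge> snd x - r" by linarith
  thus ?thesis using 1 by linarith
next
  case False
  have sq: "snd q = 0" using q by (simp add: Ln_def)
  show ?thesis
  proof (cases "y = q")
    case True
    have "\<bar>snd x - snd y\<bar> \<le> dist x y" by (rule snd_le_dist)
    moreover have "snd y = 0" using True sq by simp
    ultimately show ?thesis using s by linarith
  next
    case yq: False
    have yb: "dist (fst q, r) y < r" using y yq False by (simp add: nb_def)
    have "x \<noteq> q" using s sq by auto
    hence "x \<notin> ball (fst q, 2*r) (2*r)" using x False by (simp add: nb_def)
    hence xb: "dist (fst q, 2*r) x \<ge> 2*r" by simp
    define a where "a = dist (fst q) (fst x)"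
    define t where "t = snd x"
    have xe: "x = (fst x, t)" by (simp add: t_def)
    have d2: "dist (fst q, 2*r) x = sqrt (a^2 + (2*r - t)^2)"
      by (subst xe) (simp add: dist_Pair_Pair a_def dist_real_def)
    have d1: "dist (fst q, r) x = sqrt (a^2 + (r - t)^2)"
      by (subst xe) (simp add: dist_Pair_Pair a_def dist_real_def)
    have "(2*r)^2 \<le> (sqrt (a^2 + (2*r - t)^2))^2"
      using xb d2 r by (intro power_mono) auto
    hence A1: "(2*r)^2 \<le> a^2 + (2*r - t)^2" by simp
    have "\<bar>snd (fst q, r) - snd y\<bar> \<le> dist (fst q, r) y" by (rule snd_le_dist)
    hence sy: "snd y < 2*r" using yb by simp
    have "\<bar>snd x - snd y\<bar> \<le> dist x y" by (rule snd_le_dist)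
    hence B1: "dist x y \<ge> t - snd y" unfolding t_def by linarith
    have "dist (fst q, r) x \<le> dist (fst q, r) y + dist y x" by (rule dist_triangle)
    hence B2: "dist x y \<ge> sqrt (a^2 + (r - t)^2) - r" using d1 yb by (simp add: dist_commute)
    show ?thesis
    proof (cases "t > 4*r")
      case True thus ?thesis using B1 sy unfolding t_def by linarith
    next
      case False
      have st: "t > 0" using s by (simp add: t_def)
      have "0 \<le> t * (4*r - t)" using False st by simp
      hence "(r + t/2)^2 \<le> a^2 + (r - t)^2" using A1 by (simp add: power2_eq_square algebra_simps)
      hence "r + t/2 \<le> sqrt (a^2 + (r - t)^2)" by (rule real_le_rsqrt)
      thus ?thesis using B2 unfolding t_def by linarith
    qed
  qed
qed

lemma nb_of_basic:
  fixes A :: "((real^'m) \<times> real) set"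
  assumes A: "A \<subseteq> Ln" and p: "p \<in> Ln" and N: "basic_nbhd A p N"
  shows "\<exists>e>0. N = nb A p e"
  using N p Pn_Ln unfolding basic_nbhd_def nb_def by auto

lemma nb_basic:
  fixes A :: "((real^'m) \<times> real) set"
  assumes p: "p \<in> Ln" and e: "e > 0"
  shows "basic_nbhd A p (nb A p e)"
proof (cases "p \<in> A")
  case True thus ?thesis using e by (simp add: nb_def basic_A)
next
  case False thus ?thesis using e p by (simp add: nb_def basic_T)
qed

lemma nb_mono:
  assumes "0 < e" "e \<le> e'" shows "nb A p e \<subseteq> nb A p e'"
proof (cases "p \<in> A")
  case True thus ?thesis using assms by (auto simp: nb_def)
next
  case False thus ?thesis using tball_mono[OF assms, of "fst p"] by (auto simp: nb_def)
qed

lemma z_normal: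
  fixes A :: "((real^'m) \<times> real) set"
  assumes A: "A \<subseteq> Ln" and z: "z_embedded (tau A) Ln"
  shows "normal_space (tau A)"
  unfolding normal_space_def
proof (intro allI impI)
  fix F G :: "((real^'m) \<times> real) set"
  assume FG: "closedin (tau A) F \<and> closedin (tau A) G \<and> disjnt F G"
  hence F: "closedin (tau A) F" and G: "closedin (tau A) G" and dFG: "F \<inter> G = {}"
    by (auto simp: disjnt_def)
  have FX: "F \<subseteq> Xn" and GX: "G \<subseteq> Xn" using closedin_subset F G topspace_tau[OF A] by auto
  define H where "H = F \<inter> Ln"
  define K where "K = G \<inter> Ln"
  have cH: "closedin (tau A) H" unfolding H_def using F closedin_Ln[OF A] by (rule closedin_Int)
  have cK: "closedin (tau A) K" unfolding K_def using G closedin_Ln[OF A] by (rule closedin_Int)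
  have HK0: "H \<subseteq> Ln" "K \<subseteq> Ln" "H \<inter> K = {}" using dFG by (auto simp: H_def K_def)
  obtain U0 V0 where UV0: "openin (tau A) U0" "openin (tau A) V0" "H \<subseteq> U0" "K \<subseteq> V0" "U0 \<inter> V0 = {}"
    using sep_L[OF A z HK0(1) HK0(2) cH cK HK0(3)] by blast
  have oU': "openin (tau A) (U0 - G)" using UV0(1) G by (rule openin_diff)
  have oV': "openin (tau A) (V0 - F)" using UV0(2) F by (rule openin_diff)
  have oXG: "openin (tau A) (Xn - G)" using G topspace_tau[OF A] by (simp add: closedin_def)
  have oXF: "openin (tau A) (Xn - F)" using F topspace_tau[OF A] by (simp add: closedin_def)
  have exH: "\<exists>r>0. nb A p (2*r) \<subseteq> U0 - G" if p: "p \<in> H" for p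
  proof -
    have pL: "p \<in> Ln" and pU: "p \<in> U0 - G" using p UV0(3) dFG by (auto simp: H_def)
    obtain N where N: "basic_nbhd A p N" "N \<subseteq> U0 - G" using oU' pU unfolding openin_tau[OF A] by blast
    obtain e where e: "e > 0" "N = nb A p e" using nb_of_basic[OF A pL N(1)] by blast
    show ?thesis using e N(2) by (intro exI[of _ "e/2"]) auto
  qed
  have exK: "\<exists>r>0. nb A p (2*r) \<subseteq> V0 - F" if p: "p \<in> K" for p
  proof -
    have pL: "p \<in> Ln" and pU: "p \<in> V0 - F" using p UV0(4) dFG by (auto simp: K_def)
    obtain N where N: "basic_nbhd A p N" "N \<subseteq> V0 - F" using oV' pU unfolding openin_tau[OF A] by blast
    obtain e where e: "e > 0" "N = nb A p e" using nb_of_basic[OF A pL N(1)] by blast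
    show ?thesis using e N(2) by (intro exI[of _ "e/2"]) auto
  qed
  have exF: "\<exists>e>0. e < snd x \<and> ball x e \<subseteq> Xn - G" if x: "x \<in> F \<inter> Pn" for x
  proof -
    have xG: "x \<in> Xn - G" using x dFG Pn_Xn by auto
    obtain N where N: "basic_nbhd A x N" "N \<subseteq> Xn - G" using oXG xG unfolding openin_tau[OF A] by blast
    thus ?thesis using x A Pn_Ln unfolding basic_nbhd_def by auto
  qed
  have exG: "\<exists>e>0. e < snd x \<and> ball x e \<subseteq> Xn - F" if x: "x \<in> G \<inter> Pn" for x
  proof -
    have xG: "x \<in> Xn - F" using x dFG Pn_Xn by auto
    obtain N where N: "basic_nbhd A x N" "N \<subseteq> Xn - F" using oXF xG unfolding openin_tau[OF A] by blast
    thus ?thesis using x A Pn_Ln unfolding basic_nbhd_def by auto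
  qed
  have "\<forall>p\<in>H. \<exists>r>0. nb A p (2*r) \<subseteq> U0 - G" by (rule ballI, rule exH)
  from bchoice[OF this] obtain rH where rH0: "\<forall>p\<in>H. rH p > 0 \<and> nb A p (2 * rH p) \<subseteq> U0 - G" by (elim exE) blast
  have rH: "rH p > 0 \<and> nb A p (2 * rH p) \<subseteq> U0 - G" if "p \<in> H" for p by (rule bspec[OF rH0 that])
  have "\<forall>p\<in>K. \<exists>r>0. nb A p (2*r) \<subseteq> V0 - F" by (rule ballI, rule exK)
  from bchoice[OF this] obtain rK where rK0: "\<forall>p\<in>K. rK p > 0 \<and> nb A p (2 * rK p) \<subseteq> V0 - F" by (elim exE) blast
  have rK: "rK p > 0 \<and> nb A p (2 * rK p) \<subseteq> V0 - F" if "p \<in> K" for p by (rule bspec[OF rK0 that])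
  have "\<forall>p\<in>F \<inter> Pn. \<exists>e>0. e < snd p \<and> ball p e \<subseteq> Xn - G" by (rule ballI, rule exF)
  from bchoice[OF this] obtain eF where eF0: "\<forall>p\<in>F \<inter> Pn. eF p > 0 \<and> eF p < snd p \<and> ball p (eF p) \<subseteq> Xn - G" by (elim exE) blast
  have eF: "eF p > 0 \<and> eF p < snd p \<and> ball p (eF p) \<subseteq> Xn - G" if "p \<in> F \<inter> Pn" for p by (rule bspec[OF eF0 that])
  have "\<forall>p\<in>G \<inter> Pn. \<exists>e>0. e < snd p \<and> ball p e \<subseteq> Xn - F" by (rule ballI, rule exG)
  from bchoice[OF this] obtain eG where eG0: "\<forall>p\<in>G \<inter> Pn. eG p > 0 \<and> eG p < snd p \<and> ball p (eG p) \<subseteq> Xn - F" by (elim exE) blast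
  have eG: "eG p > 0 \<and> eG p < snd p \<and> ball p (eG p) \<subseteq> Xn - F" if "p \<in> G \<inter> Pn" for p by (rule bspec[OF eG0 that])
  define sF where "sF = (\<lambda>x. min (eF x / 2) (snd x / 4))"
  define sG where "sG = (\<lambda>x. min (eG x / 2) (snd x / 4))"
  define U where "U = (\<Union>p\<in>H. nb A p (rH p)) \<union> (\<Union>x\<in>F \<inter> Pn. ball x (sF x))"
  define V where "V = (\<Union>p\<in>K. nb A p (rK p)) \<union> (\<Union>x\<in>G \<inter> Pn. ball x (sG x))"
  have HL: "H \<subseteq> Ln" "K \<subseteq> Ln" by (auto simp: H_def K_def)
  have nbH: "nb A p (rH p) \<subseteq> nb A p (2 * rH p)" if "p \<in> H" for p
    using rH[OF that] by (intro nb_mono) auto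
  have nbK: "nb A p (rK p) \<subseteq> nb A p (2 * rK p)" if "p \<in> K" for p
    using rK[OF that] by (intro nb_mono) auto
  have sFp: "sF x > 0" "sF x < snd x" if "x \<in> F \<inter> Pn" for x
    using eF[OF that] that by (auto simp: sF_def Pn_def)
  have sGp: "sG x > 0" "sG x < snd x" if "x \<in> G \<inter> Pn" for x
    using eG[OF that] that by (auto simp: sG_def Pn_def)
  have "openin (tau A) U"
  proof -
    have "openin (tau A) (nb A p (rH p))" if "p \<in> H" for p
      using basic_nbhd_open[OF A nb_basic[of p "rH p" A]] rH[OF that] HL that by auto
    moreover have "openin (tau A) (ball x (sF x))" if "x \<in> F \<inter> Pn" for x
      using basic_nbhd_open[OF A basic_P[of x "sF x" A]] sFp[OF that] that by auto
    ultimately show ?thesis unfolding U_def by (intro openin_Un openin_Union) auto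
  qed
  moreover have "openin (tau A) V"
  proof -
    have "openin (tau A) (nb A p (rK p))" if "p \<in> K" for p
      using basic_nbhd_open[OF A nb_basic[of p "rK p" A]] rK[OF that] HL that by auto
    moreover have "openin (tau A) (ball x (sG x))" if "x \<in> G \<inter> Pn" for x
      using basic_nbhd_open[OF A basic_P[of x "sG x" A]] sGp[OF that] that by auto
    ultimately show ?thesis unfolding V_def by (intro openin_Un openin_Union) auto
  qed
  moreover have "F \<subseteq> U"
  proof
    fix x assume x: "x \<in> F"
    show "x \<in> U"
    proof (cases "x \<in> Ln")
      case True
      hence "x \<in> H" using x by (simp add: H_def)
      moreover have "x \<in> nb A x (rH x)"
        using basic_nbhd_open[OF A nb_basic[of x "rH x" A]] rH[OF \<open>x \<in> H\<close>] True by auto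
      ultimately show ?thesis unfolding U_def by blast
    next
      case False
      hence "x \<in> F \<inter> Pn" using x FX Xn_cases by auto
      moreover have "x \<in> ball x (sF x)" using sFp[OF calculation] by simp
      ultimately show ?thesis unfolding U_def by blast
    qed
  qed
  moreover have "G \<subseteq> V"
  proof
    fix x assume x: "x \<in> G"
    show "x \<in> V"
    proof (cases "x \<in> Ln")
      case True
      hence "x \<in> K" using x by (simp add: K_def)
      moreover have "x \<in> nb A x (rK x)"
        using basic_nbhd_open[OF A nb_basic[of x "rK x" A]] rK[OF \<open>x \<in> K\<close>] True by auto
      ultimately show ?thesis unfolding V_def by blast
    next
      case False
      hence "x \<in> G \<inter> Pn" using x GX Xn_cases by auto
      moreover have "x \<in> ball x (sG x)" using sGp[OF calculation] by simp
      ultimately show ?thesis unfolding V_def by blast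
    qed
  qed
  moreover have "U \<inter> V = {}"
  proof (rule ccontr)
    assume "U \<inter> V \<noteq> {}"
    then obtain z where zU: "z \<in> U" and zV: "z \<in> V" by blast
    consider (LL) p q where "p \<in> H" "z \<in> nb A p (rH p)" "q \<in> K" "z \<in> nb A q (rK q)"
      | (LP) p y where "p \<in> H" "z \<in> nb A p (rH p)" "y \<in> G \<inter> Pn" "z \<in> ball y (sG y)"
      | (PL) x q where "x \<in> F \<inter> Pn" "z \<in> ball x (sF x)" "q \<in> K" "z \<in> nb A q (rK q)"
      | (PP) x y where "x \<in> F \<inter> Pn" "z \<in> ball x (sF x)" "y \<in> G \<inter> Pn" "z \<in> ball y (sG y)"
      using zU zV unfolding U_def V_def by blast
    then show False
    proof cases
      case LL
      hence "z \<in> U0" "z \<in> V0" using nbH nbK rH rK by blast+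
      thus False using UV0(5) by blast
    next
      case LP
      have yn: "y \<notin> nb A p (2 * rH p)" using rH[OF LP(1)] LP(3) by blast
      have "dist y z \<ge> snd y / 2"
        using geo[of p "rH p" y A z] yn LP HL rH[OF LP(1)] by (auto simp: Pn_def)
      moreover have "dist y z < snd y / 4" using LP(4) sGp[OF LP(3)] by (simp add: sG_def)
      moreover have "snd y > 0" using LP(3) by (simp add: Pn_def)
      ultimately show False by linarith
    next
      case PL
      have xn: "x \<notin> nb A q (2 * rK q)" using rK[OF PL(3)] PL(1) by blast
      have "dist x z \<ge> snd x / 2"
        using geo[of q "rK q" x A z] xn PL HL rK[OF PL(3)] by (auto simp: Pn_def)
      moreover have "dist x z < snd x / 4" using PL(2) by (simp add: sF_def)
      moreover have "snd x > 0" using PL(1) by (simp add: Pn_def)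
      ultimately show False by linarith
    next
      case PP
      have "y \<notin> ball x (eF x)" using eF[OF PP(1)] PP(3) by blast
      hence 1: "dist x y \<ge> eF x" by simp
      have "x \<notin> ball y (eG y)" using eG[OF PP(3)] PP(1) by blast
      hence 2: "dist y x \<ge> eG y" by simp
      have "dist x y \<le> dist x z + dist z y" by (rule dist_triangle)
      moreover have "dist x z < eF x / 2" using PP(2) by (simp add: sF_def)
      moreover have "dist z y < eG y / 2" using PP(4) by (simp add: sG_def dist_commute)
      ultimately show False using 1 2 by (simp add: dist_commute)
    qed
  qed
  ultimately show "\<exists>U V. openin (tau A) U \<and> openin (tau A) V \<and> F \<subseteq> U \<and> G \<subseteq> V \<and> disjnt U V"
    unfolding disjnt_def by blast
qed


theorem mainTheorem7:
  fixes A :: "((real^'m) \<times> real) set"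
  assumes "A \<subseteq> Ln"
  shows "(normal_space (tau A) \<longleftrightarrow> C_star_embedded (tau A) Ln) \<and>
         (C_star_embedded (tau A) Ln \<longleftrightarrow> z_embedded (tau A) Ln)"
  using normal_Cstar[OF assms] Cstar_z[of "tau A" Ln] z_normal[OF assms] by blast

end
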